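(* In the standing setting, let $k_1,k_2>0$, let $\beta_{\min}\in(\beta_{\mathrm{crit}},1]$ be a constant, and let $\beta:[0,\infty)\to[\beta_{\min},1]$ be continuous. Apply the relieved control law. Then the origin of the closed-loop error dynamics is almost globally uniformly exponentially stable, in the following sense: (i) for every $\mathbf z_0\in\mathbb R^6$ and every $T\ge0$ such that the closed-loop solution satisfies $\mathbf z(s)\in\mathcal D(s)$ for all $s\in[0,T]$, one has $\|\mathbf z(t)\|\le\rho\|\mathbf z_0\|e^{-\theta t}$ for all $t\in[0,T]$, where $\rho>0$ and $\theta>0$ are the constants defined in the context; (ii) the set of initial conditions $\mathbf z_0\in\mathbb R^6$ whose closed-loop solution (of the linear time-varying system $\dot{\mathbf z}_1=\mathbf z_2$, $\dot{\mathbf z}_2=-\beta(t)[(1+k_1k_2)\mathbf z_1+(k_1+k_2)\mathbf z_2]$) satisfies $\mathbf z_1(t)=\mathbf w_j(t)$ for some $t\ge0$ and some $j$ has Lebesgue measure zero in $\mathbb R^6$.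
   Context: Standing setting: Let $P\ge1$. For $j=1,\dots,P$ let $\mu_j>0$ and let $\mathbf r_j:[0,\infty)\to\mathbb R^3$ be continuously differentiable, with $\mathbf r_1\equiv\mathbf 0$. Let $\mathbf r^*:[0,\infty)\to\mathbb R^3$ be continuously differentiable (the target trajectory) with $\mathbf r^*(t)\neq\mathbf r_j(t)$ for all $t\ge0$ and all $j$, and set $\mathbf w_j(t):=\mathbf r_j(t)-\mathbf r^*(t)$. For $t\ge0$ and $\mathbf z_1\in\mathbb R^3$ with $\mathbf z_1\ne\mathbf w_j(t)$ for all $j$, define $$\mathbf f_a(t,\mathbf z_1)=\sum_{j=1}^P\mu_j\left(\frac{\mathbf w_j(t)-\mathbf z_1}{\|\mathbf w_j(t)-\mathbf z_1\|^3}-\frac{\mathbf w_j(t)}{\|\mathbf w_j(t)\|^3}\right).$$ The controlled error dynamics are $\dot{\mathbf z}_1(t)=\mathbf z_2(t)$, $\dot{\mathbf z}_2(t)=\mathbf f_a(t,\mathbf z_1(t))+\mathbf u(t)$, with state $\mathbf z=(\mathbf z_1,\mathbf z_2)\in\mathbb R^6$, control $\mathbf u(t)\in\mathbb R^3$, initial time $0$ and $\mathbf z_0:=\mathbf z(0)$, defined on $\mathcal D(t)=\{(\mathbf x,\mathbf y)\in\mathbb R^6:\mathbf x\neq\mathbf w_j(t),\ j=1,\dots,P\}$. $\|\cdot\|$ is the Euclidean norm; $\lambda_{\min},\lambda_{\max}$ denote smallest/largest eigenvalues. Relieved control law: $\mathbf u(t)=-\beta(t)\big[(1+k_1k_2)\mathbf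 z_1(t)+(k_1+k_2)\mathbf z_2(t)\big]-\mathbf f_a(t,\mathbf z_1(t))$. Critical relief: $\beta_{\mathrm{crit}}=\dfrac{k_1^4+2k_1k_2+1-2\sqrt{(k_1k_2+1)(k_1k_2+k_1^4)}}{(k_1^2-1)^2}$ if $k_1\ne1$, and $\beta_{\mathrm{crit}}=\dfrac{1}{1+k_2}$ if $k_1=1$. Matrices and constants: $\mathbf X=\begin{bmatrix}(1+k_1^2)\mathbf I_3&k_1\mathbf I_3\\k_1\mathbf I_3&\mathbf I_3\end{bmatrix}$, $\rho=\sqrt{\lambda_{\max}(\mathbf X)/\lambda_{\min}(\mathbf X)}$; $\mathbf U(\beta)=\begin{bmatrix}2(k_1+k_1^2k_2)\beta\,\mathbf I_3 & ((k_1^2+2k_1k_2+1)\beta-k_1^2-1)\mathbf I_3\\ ((k_1^2+2k_1k_2+1)\beta-k_1^2-1)\mathbf I_3 & 2((k_1+k_2)\beta-k_1)\mathbf I_3\end{bmatrix}$; $\theta=\dfrac{\lambda_{\min}(\mathbf U(\beta_{\min}))}{2\lambda_{\max}(\mathbf X)}$. *)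

theory Defs
  imports "HOL-Analysis.Analysis"
begin

text \<open>State space R^6 is rendered as (real^3) x (real^3), a state being (z1, z2).
  Its norm is the Euclidean norm of R^6 and lebesgue is Lebesgue measure on R^6.\<close>

type_synonym vec3 = "real^3"
type_synonym state = "vec3 \<times> vec3"

definition C1_nonneg :: "(real \<Rightarrow> vec3) \<Rightarrow> bool" where
  "C1_nonneg f \<longleftrightarrow> (\<exists>f'. (\<forall>t\<ge>0. (f has_vector_derivative f' t) (at t within {0..}))
                         \<and> continuous_on {0..} f')"

definition wj :: "(nat \<Rightarrow> real \<Rightarrow> vec3) \<Rightarrow> (real \<Rightarrow> vec3) \<Rightarrow> nat \<Rightarrow> real \<Rightarrow> vec3" where
  "wj r rs j t = r j t - rs t"

definition f_a :: "nat \<Rightarrow> (nat \<Rightarrow> real) \<Rightarrow> (nat \<Rightarrow> real \<Rightarrow> vec3) \<Rightarrow> (real \<Rightarrow> vec3)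
                   \<Rightarrow> real \<Rightarrow> vec3 \<Rightarrow> vec3" where
  "f_a P \<mu> r rs t z1 = (\<Sum>j\<in>{1..P}. \<mu> j *\<^sub>R
      ((1 / norm (wj r rs j t - z1) ^ 3) *\<^sub>R (wj r rs j t - z1)
       - (1 / norm (wj r rs j t) ^ 3) *\<^sub>R wj r rs j t))"

definition dom_D :: "nat \<Rightarrow> (nat \<Rightarrow> real \<Rightarrow> vec3) \<Rightarrow> (real \<Rightarrow> vec3) \<Rightarrow> real \<Rightarrow> state set" where
  "dom_D P r rs t = {(x, y). \<forall>j\<in>{1..P}. x \<noteq> wj r rs j t}"

definition u_relieved :: "nat \<Rightarrow> (nat \<Rightarrow> real) \<Rightarrow> (nat \<Rightarrow> real \<Rightarrow> vec3) \<Rightarrow> (real \<Rightarrow> vec3)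
                          \<Rightarrow> (real \<Rightarrow> real) \<Rightarrow> real \<Rightarrow> real \<Rightarrow> real \<Rightarrow> state \<Rightarrow> vec3" where
  "u_relieved P \<mu> r rs \<beta> k1 k2 t z =
     - (\<beta> t *\<^sub>R ((1 + k1 * k2) *\<^sub>R fst z + (k1 + k2) *\<^sub>R snd z)) - f_a P \<mu> r rs t (fst z)"

definition closed_loop :: "nat \<Rightarrow> (nat \<Rightarrow> real) \<Rightarrow> (nat \<Rightarrow> real \<Rightarrow> vec3) \<Rightarrow> (real \<Rightarrow> vec3)
                          \<Rightarrow> (real \<Rightarrow> real) \<Rightarrow> real \<Rightarrow> real \<Rightarrow> real \<Rightarrow> state \<Rightarrow> state" where
  "closed_loop P \<mu> r rs \<beta> k1 k2 t z =
     (snd z, f_a P \<mu> r rs t (fst z) + u_relieved P \<mu> r rs \<beta> k1 k2 t z)"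

definition ltv_field :: "(real \<Rightarrow> real) \<Rightarrow> real \<Rightarrow> real \<Rightarrow> real \<Rightarrow> state \<Rightarrow> state" where
  "ltv_field \<beta> k1 k2 t z =
     (snd z, - (\<beta> t *\<^sub>R ((1 + k1 * k2) *\<^sub>R fst z + (k1 + k2) *\<^sub>R snd z)))"

definition beta_crit :: "real \<Rightarrow> real \<Rightarrow> real" where
  "beta_crit k1 k2 = (if k1 \<noteq> 1 then
      (k1 ^ 4 + 2 * k1 * k2 + 1 - 2 * sqrt ((k1 * k2 + 1) * (k1 * k2 + k1 ^ 4))) / (k1\<^sup>2 - 1)\<^sup>2
    else 1 / (1 + k2))"

text \<open>The 6x6 block matrix [[a I3, b I3],[c I3, d I3]] as the linear map it induces on R^6.\<close>
definition block_op :: "real \<Rightarrow> real \<Rightarrow> real \<Rightarrow> real \<Rightarrow> state \<Rightarrow> state" where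
  "block_op a b c d z = (a *\<^sub>R fst z + b *\<^sub>R snd z, c *\<^sub>R fst z + d *\<^sub>R snd z)"

definition eigenvalues_op :: "(state \<Rightarrow> state) \<Rightarrow> real set" where
  "eigenvalues_op A = {c. \<exists>v. v \<noteq> 0 \<and> A v = c *\<^sub>R v}"

definition lambda_min :: "(state \<Rightarrow> state) \<Rightarrow> real" where
  "lambda_min A = Min (eigenvalues_op A)"

definition lambda_max :: "(state \<Rightarrow> state) \<Rightarrow> real" where
  "lambda_max A = Max (eigenvalues_op A)"

definition Xmat :: "real \<Rightarrow> state \<Rightarrow> state" where
  "Xmat k1 = block_op (1 + k1\<^sup>2) k1 k1 1"

definition Umat :: "real \<Rightarrow> real \<Rightarrow> real \<Rightarrow> state \<Rightarrow> state" where
  "Umat k1 k2 \<beta> = block_op (2 * (k1 + k1\<^sup>2 * k2) * \<beta>)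
      ((k1\<^sup>2 + 2 * k1 * k2 + 1) * \<beta> - k1\<^sup>2 - 1)
      ((k1\<^sup>2 + 2 * k1 * k2 + 1) * \<beta> - k1\<^sup>2 - 1)
      (2 * ((k1 + k2) * \<beta> - k1))"

definition rho_const :: "real \<Rightarrow> real" where
  "rho_const k1 = sqrt (lambda_max (Xmat k1) / lambda_min (Xmat k1))"

definition theta_const :: "real \<Rightarrow> real \<Rightarrow> real \<Rightarrow> real" where
  "theta_const k1 k2 \<beta>min = lambda_min (Umat k1 k2 \<beta>min) / (2 * lambda_max (Xmat k1))"

end

theory Submission
  imports Defs
begin

definition l1 :: "real \<Rightarrow> real \<Rightarrow> real \<Rightarrow> real" where
  "l1 a b d = (a + d) / 2 - sqrt (((a - d) / 2)\<^sup>2 + b\<^sup>2)"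
definition l2 :: "real \<Rightarrow> real \<Rightarrow> real \<Rightarrow> real" where
  "l2 a b d = (a + d) / 2 + sqrt (((a - d) / 2)\<^sup>2 + b\<^sup>2)"

lemma l_facts:
  shows "a - l1 a b d \<ge> 0" "d - l1 a b d \<ge> 0" "(a - l1 a b d) * (d - l1 a b d) = b\<^sup>2"
    "l2 a b d - a \<ge> 0" "l2 a b d - d \<ge> 0" "(l2 a b d - a) * (l2 a b d - d) = b\<^sup>2"
    "l1 a b d \<le> l2 a b d"
proof -
  define s where "s = sqrt (((a - d) / 2)\<^sup>2 + b\<^sup>2)"
  have s0: "s \<ge> 0" unfolding s_def by simp
  have s2: "s\<^sup>2 = ((a - d) / 2)\<^sup>2 + b\<^sup>2" unfolding s_def by simp
  have sge: "s \<ge> \<bar>(a - d) / 2\<bar>"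
  proof -
    have "\<bar>(a - d) / 2\<bar> = sqrt (((a - d) / 2)\<^sup>2)" by simp
    also have "\<dots> \<le> s" unfolding s_def by (rule real_sqrt_le_mono) simp
    finally show ?thesis .
  qed
  show "a - l1 a b d \<ge> 0" "d - l1 a b d \<ge> 0" "l2 a b d - a \<ge> 0" "l2 a b d - d \<ge> 0"
    "l1 a b d \<le> l2 a b d"
  proof -
    have "s \<ge> (a - d) / 2" "s \<ge> - ((a - d) / 2)" using sge by linarith+
    note h = this s0
    show "a - l1 a b d \<ge> 0" unfolding l1_def s_def[symmetric] using h by (simp add: field_simps)
    show "d - l1 a b d \<ge> 0" unfolding l1_def s_def[symmetric] using h by (simp add: field_simps)
    show "l2 a b d - a \<ge> 0" unfolding l2_def s_def[symmetric] using h by (simp add: field_simps)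
    show "l2 a b d - d \<ge> 0" unfolding l2_def s_def[symmetric] using h by (simp add: field_simps)
    show "l1 a b d \<le> l2 a b d" unfolding l1_def l2_def s_def[symmetric] using h by (simp add: field_simps)
  qed
  have "(a - ((a + d) / 2 - s)) * (d - ((a + d) / 2 - s)) = s^2 - ((a-d)/2)^2"
    by (simp add: power2_eq_square field_simps)
  then show "(a - l1 a b d) * (d - l1 a b d) = b\<^sup>2"
    unfolding l1_def s_def[symmetric] using s2 by simp
  have "((a + d) / 2 + s - a) * ((a + d) / 2 + s - d) = s^2 - ((a-d)/2)^2"
    by (simp add: power2_eq_square field_simps)
  then show "(l2 a b d - a) * (l2 a b d - d) = b\<^sup>2"
    unfolding l2_def s_def[symmetric] using s2 by simp
qed

lemma quad_nonneg:
  fixes X Y C :: real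
  assumes "\<alpha> \<ge> 0" "\<delta> \<ge> 0" "\<alpha> * \<delta> = b\<^sup>2" "\<bar>C\<bar> \<le> X * Y" "X \<ge> 0" "Y \<ge> 0"
  shows "\<alpha> * X\<^sup>2 + 2 * b * C + \<delta> * Y\<^sup>2 \<ge> 0"
proof -
  have h1: "2 * b * C \<ge> - 2 * \<bar>b\<bar> * (X * Y)"
  proof -
    have "\<bar>2 * b * C\<bar> \<le> 2 * \<bar>b\<bar> * (X * Y)"
      using assms(4) by (simp add: abs_mult mult_left_mono)
    then show ?thesis by linarith
  qed
  have "\<alpha> * X\<^sup>2 - 2 * \<bar>b\<bar> * (X * Y) + \<delta> * Y\<^sup>2 \<ge> 0"
  proof (cases "\<alpha> = 0")
    case True
    then have "b = 0" using assms(3) by simp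
    then show ?thesis using True assms by simp
  next
    case False
    then have ap: "\<alpha> > 0" using assms(1) by simp
    have "\<alpha> * (\<alpha> * X\<^sup>2 - 2 * \<bar>b\<bar> * (X * Y) + \<delta> * Y\<^sup>2) = (\<alpha> * X - \<bar>b\<bar> * Y)\<^sup>2"
      using assms(3) by (simp add: algebra_simps power2_eq_square)
    also have "\<dots> \<ge> 0" by simp
    finally show ?thesis using ap by (simp add: zero_le_mult_iff)
  qed
  then show ?thesis using h1 by linarith
qed

definition Qf :: "real \<Rightarrow> real \<Rightarrow> real \<Rightarrow> state \<Rightarrow> real" where
  "Qf a b d z = a * (fst z \<bullet> fst z) + 2 * b * (fst z \<bullet> snd z) + d * (snd z \<bullet> snd z)"

lemma norm_state_sq: "(norm (z::state))\<^sup>2 = fst z \<bullet> fst z + snd z \<bullet> snd z"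
  by (cases z) (simp add: norm_Pair power2_norm_eq_inner)

lemma rayleigh:
  shows "l1 a b d * (norm z)\<^sup>2 \<le> Qf a b d z" "Qf a b d z \<le> l2 a b d * (norm z)\<^sup>2"
proof -
  have C: "\<bar>fst z \<bullet> snd z\<bar> \<le> norm (fst z) * norm (snd z)" by (rule Cauchy_Schwarz_ineq2)
  have C': "\<bar>- (fst z \<bullet> snd z)\<bar> \<le> norm (fst z) * norm (snd z)" using C by simp
  have X: "fst z \<bullet> fst z = (norm (fst z))\<^sup>2" "snd z \<bullet> snd z = (norm (snd z))\<^sup>2"
    by (simp_all add: power2_norm_eq_inner)
  have "(a - l1 a b d) * (norm (fst z))\<^sup>2 + 2 * b * (fst z \<bullet> snd z) + (d - l1 a b d) * (norm (snd z))\<^sup>2 \<ge> 0"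
    by (rule quad_nonneg) (use l_facts C in auto)
  then show "l1 a b d * (norm z)\<^sup>2 \<le> Qf a b d z"
    unfolding Qf_def norm_state_sq X by (simp add: algebra_simps)
  have "(l2 a b d - a) * (norm (fst z))\<^sup>2 + 2 * b * (- (fst z \<bullet> snd z)) + (l2 a b d - d) * (norm (snd z))\<^sup>2 \<ge> 0"
    by (rule quad_nonneg) (use l_facts C' in auto)
  then show "Qf a b d z \<le> l2 a b d * (norm z)\<^sup>2"
    unfolding Qf_def norm_state_sq X by (simp add: algebra_simps)
qed

lemma l1_pos: assumes "a > 0" "a * d - b\<^sup>2 > 0" shows "l1 a b d > 0"
proof -
  have d: "d > 0" using assms by (metis diff_gt_0_iff_gt less_le_trans mult_pos_pos zero_le_power2
        zero_less_mult_pos not_less)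
  have "sqrt (((a - d) / 2)\<^sup>2 + b\<^sup>2) < sqrt (((a + d) / 2)\<^sup>2)"
    by (rule real_sqrt_less_mono) (use assms in \<open>simp add: power2_eq_square field_simps\<close>)
  also have "\<dots> = (a + d) / 2" using assms d by simp
  finally show ?thesis unfolding l1_def by simp
qed

lemma eig_block: "eigenvalues_op (block_op a b b d) = {l1 a b d, l2 a b d}"
proof (rule set_eqI, rule iffI)
  fix c assume "c \<in> eigenvalues_op (block_op a b b d)"
  then obtain v where v: "v \<noteq> 0" "block_op a b b d v = c *\<^sub>R v" unfolding eigenvalues_op_def by auto
  obtain x y where xy: "v = (x, y)" by (cases v)
  have e1: "a *\<^sub>R x + b *\<^sub>R y = c *\<^sub>R x" and e2: "b *\<^sub>R x + d *\<^sub>R y = c *\<^sub>R y"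
    using v(2) unfolding xy block_op_def by auto
  have ex: "(a - c) *\<^sub>R x = - (b *\<^sub>R y)" using e1 by (simp add: algebra_simps)
  have ey: "(d - c) *\<^sub>R y = - (b *\<^sub>R x)" using e2 by (simp add: algebra_simps)
  have fx: "((a - c) * (d - c) - b\<^sup>2) *\<^sub>R x = 0"
  proof -
    have "((a - c) * (d - c)) *\<^sub>R x = (d - c) *\<^sub>R ((a - c) *\<^sub>R x)" by (simp add: algebra_simps)
    also have "\<dots> = (d - c) *\<^sub>R (- (b *\<^sub>R y))" by (simp only: ex)
    also have "\<dots> = - (b *\<^sub>R ((d - c) *\<^sub>R y))" by (simp add: algebra_simps)
    also have "\<dots> = b\<^sup>2 *\<^sub>R x" by (simp add: ey power2_eq_square)
    finally show ?thesis by (simp add: algebra_simps)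
  qed
  have fy: "((a - c) * (d - c) - b\<^sup>2) *\<^sub>R y = 0"
  proof -
    have "((a - c) * (d - c)) *\<^sub>R y = (a - c) *\<^sub>R ((d - c) *\<^sub>R y)" by (simp add: algebra_simps)
    also have "\<dots> = (a - c) *\<^sub>R (- (b *\<^sub>R x))" by (simp only: ey)
    also have "\<dots> = - (b *\<^sub>R ((a - c) *\<^sub>R x))" by (simp add: algebra_simps)
    also have "\<dots> = b\<^sup>2 *\<^sub>R y" by (simp add: ex power2_eq_square)
    finally show ?thesis by (simp add: algebra_simps)
  qed
  have q: "(a - c) * (d - c) = b\<^sup>2"
    using fx fy v(1) xy by (auto simp: zero_prod_def)
  define s where "s = sqrt (((a - d) / 2)\<^sup>2 + b\<^sup>2)"
  have s2: "s\<^sup>2 = ((a - d) / 2)\<^sup>2 + b\<^sup>2" unfolding s_def by simp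
  have "(c - (a + d) / 2)\<^sup>2 = (a - c) * (d - c) + ((a - d) / 2)\<^sup>2"
    by (simp add: power2_eq_square field_simps)
  then have "(c - (a + d) / 2)\<^sup>2 = s\<^sup>2" using q s2 by simp
  then have "c - (a + d) / 2 = s \<or> c - (a + d) / 2 = - s" by (simp add: power2_eq_iff)
  then show "c \<in> {l1 a b d, l2 a b d}" unfolding l1_def l2_def s_def[symmetric] by auto
next
  fix c assume c: "c \<in> {l1 a b d, l2 a b d}"
  then have q: "(a - c) * (d - c) = b\<^sup>2" using l_facts[of a b d] by (auto simp: algebra_simps)
  define e :: vec3 where "e = axis 1 1"
  have e0: "e \<noteq> 0" unfolding e_def by (simp add: axis_eq_0_iff)
  show "c \<in> eigenvalues_op (block_op a b b d)"
  proof (cases "b = 0")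
    case False
    let ?v = "(b *\<^sub>R e, (c - a) *\<^sub>R e)"
    have "?v \<noteq> 0" using False e0 by (simp add: zero_prod_def)
    moreover have "block_op a b b d ?v = c *\<^sub>R ?v"
    proof -
      have h1: "a * b + b * (c - a) = c * b" by (simp add: algebra_simps)
      have h2: "b * b + d * (c - a) = c * (c - a)" using q by (simp add: algebra_simps power2_eq_square)
      have "a *\<^sub>R (b *\<^sub>R e) + b *\<^sub>R ((c - a) *\<^sub>R e) = (a * b + b * (c - a)) *\<^sub>R e"
        by (simp only: scaleR_scaleR scaleR_add_left)
      also have "\<dots> = c *\<^sub>R (b *\<^sub>R e)" by (simp only: h1 scaleR_scaleR)
      finally have c1: "a *\<^sub>R (b *\<^sub>R e) + b *\<^sub>R ((c - a) *\<^sub>R e) = c *\<^sub>R (b *\<^sub>R e)" .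
      have "b *\<^sub>R (b *\<^sub>R e) + d *\<^sub>R ((c - a) *\<^sub>R e) = (b * b + d * (c - a)) *\<^sub>R e"
        by (simp only: scaleR_scaleR scaleR_add_left)
      also have "\<dots> = c *\<^sub>R ((c - a) *\<^sub>R e)" by (simp only: h2 scaleR_scaleR)
      finally have c2: "b *\<^sub>R (b *\<^sub>R e) + d *\<^sub>R ((c - a) *\<^sub>R e) = c *\<^sub>R ((c - a) *\<^sub>R e)" .
      show ?thesis unfolding block_op_def using c1 c2 by simp
    qed
    ultimately show ?thesis unfolding eigenvalues_op_def by blast
  next
    case True
    then have "c = a \<or> c = d" using q by (simp add: True) blast
    then show ?thesis
    proof
      assume "c = a"
      then have h: "block_op a b b d (e, 0) = c *\<^sub>R (e, 0)" using True unfolding block_op_def by simp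
      have "(e, 0) \<noteq> (0::state)" using e0 by (simp add: zero_prod_def)
      then show ?thesis unfolding eigenvalues_op_def using h by blast
    next
      assume "c = d"
      then have h: "block_op a b b d (0, e) = c *\<^sub>R (0, e)" using True unfolding block_op_def by simp
      have "(0, e) \<noteq> (0::state)" using e0 by (simp add: zero_prod_def)
      then show ?thesis unfolding eigenvalues_op_def using h by blast
    qed
  qed
qed

lemma lmin_block: "lambda_min (block_op a b b d) = l1 a b d"
  unfolding lambda_min_def eig_block using l_facts(7)[of a b d] by (simp add: min_def)
lemma lmax_block: "lambda_max (block_op a b b d) = l2 a b d"
  unfolding lambda_max_def eig_block using l_facts(7)[of a b d] by (simp add: max_def)

lemma deriv_nonneg_incr:
  fixes h :: "real \<Rightarrow> real"
  assumes ab: "a \<le> b"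
    and d: "\<And>s. s \<in> {a..b} \<Longrightarrow> (h has_real_derivative h' s) (at s within {a..b})"
    and nn: "\<And>s. s \<in> {a..b} \<Longrightarrow> h' s \<ge> 0"
  shows "h a \<le> h b"
proof (rule DERIV_nonneg_imp_increasing_open[OF ab])
  fix x assume x: "a < x" "x < b"
  have "at x within {a..b} = at x" using x by (simp add: at_within_Icc_at)
  then show "\<exists>y. (h has_real_derivative y) (at x) \<and> 0 \<le> y"
    using d[of x] nn[of x] x by auto
next
  show "continuous_on {a..b} h"
    unfolding continuous_on_eq_continuous_within using d DERIV_continuous by blast
qed

lemma inner_self_deriv:
  fixes g :: "real \<Rightarrow> 'a::real_inner"
  assumes "(g has_vector_derivative g') (at s within S)"
  shows "((\<lambda>s. g s \<bullet> g s) has_real_derivative (2 * (g s \<bullet> g'))) (at s within S)"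
proof -
  have "((\<lambda>s. g s \<bullet> g s) has_derivative (\<lambda>h. g s \<bullet> (h *\<^sub>R g') + (h *\<^sub>R g') \<bullet> g s)) (at s within S)"
    using has_derivative_inner[OF assms[unfolded has_vector_derivative_def] assms[unfolded has_vector_derivative_def]] .
  then show ?thesis unfolding has_field_derivative_def
    by (rule has_derivative_eq_rhs) (auto simp: fun_eq_iff inner_commute algebra_simps)
qed

lemma sq_bounds:
  fixes g :: "real \<Rightarrow> 'a::real_inner"
  assumes ab: "a \<le> b"
    and d: "\<And>s. s \<in> {a..b} \<Longrightarrow> (g has_vector_derivative g' s) (at s within {a..b})"
  shows "(\<And>s. s \<in> {a..b} \<Longrightarrow> 2 * (g s \<bullet> g' s) \<le> - c * (g s \<bullet> g s))
           \<Longrightarrow> g b \<bullet> g b \<le> exp (- c * (b - a)) * (g a \<bullet> g a)"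
    and "(\<And>s. s \<in> {a..b} \<Longrightarrow> 2 * (g s \<bullet> g' s) \<ge> - c * (g s \<bullet> g s))
           \<Longrightarrow> g a \<bullet> g a \<le> exp (c * (b - a)) * (g b \<bullet> g b)"
proof -
  define h where "h s = exp (c * (s - a)) * (g s \<bullet> g s)" for s
  have hd: "(h has_real_derivative (exp (c * (s - a)) * (c * (g s \<bullet> g s) + 2 * (g s \<bullet> g' s))))
      (at s within {a..b})" if "s \<in> {a..b}" for s
    unfolding h_def
    by (rule derivative_eq_intros inner_self_deriv d[OF that] refl | simp)+
       (simp add: algebra_simps)
  have ha: "h a = g a \<bullet> g a" unfolding h_def by simp
  have ee: "exp (- c * (b - a)) * exp (c * (b - a)) = 1" by (simp flip: exp_add)
  have hb: "g b \<bullet> g b = exp (- c * (b - a)) * h b" unfolding h_def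
    by (simp only: mult.assoc[symmetric] ee mult_1_left)
  {
    assume le: "\<And>s. s \<in> {a..b} \<Longrightarrow> 2 * (g s \<bullet> g' s) \<le> - c * (g s \<bullet> g s)"
    have "- h a \<le> - h b"
    proof (rule deriv_nonneg_incr[OF ab, of "\<lambda>s. - h s"], rule DERIV_minus[OF hd], assumption)
      fix s assume s: "s \<in> {a..b}"
      have "c * (g s \<bullet> g s) + 2 * (g s \<bullet> g' s) \<le> 0" using le[OF s] by linarith
      then have "exp (c * (s - a)) * (c * (g s \<bullet> g s) + 2 * (g s \<bullet> g' s)) \<le> 0"
        by (intro mult_nonneg_nonpos) auto
      then show "0 \<le> - (exp (c * (s - a)) * (c * (g s \<bullet> g s) + 2 * (g s \<bullet> g' s)))" by linarith
    qed
    then show "g b \<bullet> g b \<le> exp (- c * (b - a)) * (g a \<bullet> g a)"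
      unfolding hb ha by simp
  next
    assume ge: "\<And>s. s \<in> {a..b} \<Longrightarrow> 2 * (g s \<bullet> g' s) \<ge> - c * (g s \<bullet> g s)"
    have "h a \<le> h b"
    proof (rule deriv_nonneg_incr[OF ab, of h, OF hd])
      fix s assume s: "s \<in> {a..b}"
      have "c * (g s \<bullet> g s) + 2 * (g s \<bullet> g' s) \<ge> 0" using ge[OF s] by linarith
      then show "0 \<le> exp (c * (s - a)) * (c * (g s \<bullet> g s) + 2 * (g s \<bullet> g' s))"
        by (intro mult_nonneg_nonneg) auto
    qed (assumption)
    then show "g a \<bullet> g a \<le> exp (c * (b - a)) * (g b \<bullet> g b)"
      unfolding h_def by simp
  }
qed

lemma vec_mvt:
  fixes f :: "real \<Rightarrow> 'a::real_normed_vector"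
  assumes "convex S"
    and d: "\<And>s. s \<in> S \<Longrightarrow> (f has_vector_derivative f' s) (at s within S)"
    and B: "\<And>s. s \<in> S \<Longrightarrow> norm (f' s) \<le> B"
    and "x \<in> S" "y \<in> S"
  shows "norm (f x - f y) \<le> B * \<bar>x - y\<bar>"
proof -
  have "norm (f x - f y) \<le> B * norm (x - y)"
  proof (rule differentiable_bound[OF assms(1)])
    show "(f has_derivative (\<lambda>h. h *\<^sub>R f' s)) (at s within S)" if "s \<in> S" for s
      using d[OF that] unfolding has_vector_derivative_def .
    show "onorm (\<lambda>h. h *\<^sub>R f' s) \<le> B" if "s \<in> S" for s
      using B[OF that] by (simp add: onorm_scaleR_left onorm_id bounded_linear_ident)
  qed (use assms in auto)
  then show ?thesis by simp
qed

definition pU :: "real \<Rightarrow> real \<Rightarrow> real \<Rightarrow> real" where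
  "pU k1 k2 b = 2 * (k1 + k1\<^sup>2 * k2) * b"
definition rU :: "real \<Rightarrow> real \<Rightarrow> real \<Rightarrow> real" where
  "rU k1 k2 b = (k1\<^sup>2 + 2 * k1 * k2 + 1) * b - k1\<^sup>2 - 1"
definition qU :: "real \<Rightarrow> real \<Rightarrow> real \<Rightarrow> real" where
  "qU k1 k2 b = 2 * ((k1 + k2) * b - k1)"

lemma Umat_eq: "Umat k1 k2 b = block_op (pU k1 k2 b) (rU k1 k2 b) (rU k1 k2 b) (qU k1 k2 b)"
  unfolding Umat_def pU_def rU_def qU_def ..

lemma quad_between:
  fixes A B C x y z :: real
  assumes "A \<le> 0" "x < z" "z \<le> y" "A * x\<^sup>2 + B * x + C \<ge> 0" "A * y\<^sup>2 + B * y + C > 0"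
  shows "A * z\<^sup>2 + B * z + C > 0"
proof -
  have id: "(y - x) * (A * z\<^sup>2 + B * z + C) = (y - z) * (A * x\<^sup>2 + B * x + C) + (z - x) * (A * y\<^sup>2 + B * y + C)
      + (- A) * ((z - x) * (y - z) * (y - x))"
    by (simp add: power2_eq_square algebra_simps)
  have "(y - z) * (A * x\<^sup>2 + B * x + C) \<ge> 0" using assms by simp
  moreover have "(z - x) * (A * y\<^sup>2 + B * y + C) > 0" using assms by simp
  moreover have "(- A) * ((z - x) * (y - z) * (y - x)) \<ge> 0"
    by (rule mult_nonneg_nonneg) (use assms in auto)
  ultimately have "(y - x) * (A * z\<^sup>2 + B * z + C) > 0" unfolding id by linarith
  moreover have "y - x > 0" using assms by simp
  ultimately show ?thesis by (simp add: zero_less_mult_iff)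
qed

lemma det_formula:
  "pU k1 k2 b * qU k1 k2 b - (rU k1 k2 b)\<^sup>2
     = (- ((k1\<^sup>2 - 1)\<^sup>2)) * b\<^sup>2 + (2 * (k1 ^ 4 + 2 * k1 * k2 + 1)) * b + (- ((1 + k1\<^sup>2)\<^sup>2))"
  unfolding pU_def qU_def rU_def by (simp add: power2_eq_square power4_eq_xxxx algebra_simps)

lemma beta_crit_facts:
  fixes k1 k2 :: real
  assumes k1: "k1 > 0" and k2: "k2 > 0"
  shows "beta_crit k1 k2 \<ge> 0"
    "(- ((k1\<^sup>2 - 1)\<^sup>2)) * (beta_crit k1 k2)\<^sup>2 + (2 * (k1 ^ 4 + 2 * k1 * k2 + 1)) * beta_crit k1 k2
       + (- ((1 + k1\<^sup>2)\<^sup>2)) = 0"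
proof -
  define Q where "Q = (k1 * k2 + 1) * (k1 * k2 + k1 ^ 4)"
  define S where "S = sqrt Q"
  define A0 where "A0 = k1 ^ 4 + 2 * k1 * k2 + 1"
  define Dn where "Dn = (k1\<^sup>2 - 1)\<^sup>2"
  have Q0: "Q \<ge> 0" unfolding Q_def using k1 k2 by (intro mult_nonneg_nonneg add_nonneg_nonneg) auto
  have S2: "S\<^sup>2 = Q" unfolding S_def using Q0 by simp
  have S0: "S \<ge> 0" unfolding S_def using Q0 by simp
  have A0p: "A0 > 0" unfolding A0_def using k1 k2 by (simp add: add_pos_pos)
  have key: "A0\<^sup>2 - 4 * Q = (1 + k1\<^sup>2)\<^sup>2 * Dn"
    unfolding A0_def Q_def Dn_def by (simp add: power2_eq_square power4_eq_xxxx algebra_simps)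
  have "(1 + k1\<^sup>2)\<^sup>2 * Dn \<ge> 0" unfolding Dn_def by simp
  then have "(2 * S)\<^sup>2 \<le> A0\<^sup>2" using key S2 by (simp add: power_mult_distrib)
  then have A0S: "2 * S \<le> A0" by (rule power2_le_imp_le) (use A0p in simp)
  show "beta_crit k1 k2 \<ge> 0"
  proof (cases "k1 = 1")
    case True then show ?thesis unfolding beta_crit_def using k2 by simp
  next
    case False
    have "beta_crit k1 k2 = (A0 - 2 * S) / Dn"
      unfolding beta_crit_def A0_def S_def Q_def Dn_def using False by simp
    then show ?thesis using A0S unfolding Dn_def by simp
  qed
  show "(- ((k1\<^sup>2 - 1)\<^sup>2)) * (beta_crit k1 k2)\<^sup>2 + (2 * (k1 ^ 4 + 2 * k1 * k2 + 1)) * beta_crit k1 k2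
       + (- ((1 + k1\<^sup>2)\<^sup>2)) = 0"
  proof (cases "k1 = 1")
    case True then show ?thesis unfolding beta_crit_def using k2
      by (simp add: field_simps power2_eq_square)
  next
    case False
    have "k1\<^sup>2 \<noteq> 1" using False k1 by (auto simp: power2_eq_1_iff)
    then have Dn0: "Dn > 0" unfolding Dn_def by simp
    have bc: "beta_crit k1 k2 = (A0 - 2 * S) / Dn"
      unfolding beta_crit_def A0_def S_def Q_def Dn_def using False by simp
    have "Dn * ((- Dn) * ((A0 - 2 * S) / Dn)\<^sup>2 + (2 * A0) * ((A0 - 2 * S) / Dn) + (- ((1 + k1\<^sup>2)\<^sup>2)))
        = - (A0 - 2 * S)\<^sup>2 + 2 * A0 * (A0 - 2 * S) - (1 + k1\<^sup>2)\<^sup>2 * Dn"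
      using Dn0 by (simp add: power2_eq_square field_simps)
    also have "\<dots> = A0\<^sup>2 - 4 * S\<^sup>2 - (1 + k1\<^sup>2)\<^sup>2 * Dn" by (simp add: power2_eq_square algebra_simps)
    also have "\<dots> = 0" using key S2 by simp
    finally have "(- Dn) * ((A0 - 2 * S) / Dn)\<^sup>2 + (2 * A0) * ((A0 - 2 * S) / Dn) + (- ((1 + k1\<^sup>2)\<^sup>2)) = 0"
      using Dn0 by simp
    then show ?thesis unfolding bc Dn_def A0_def by simp
  qed
qed

lemma det_pos:
  fixes k1 k2 b :: real
  assumes k1: "k1 > 0" and k2: "k2 > 0" and b: "beta_crit k1 k2 < b" "b \<le> 1"
  shows "pU k1 k2 b * qU k1 k2 b - (rU k1 k2 b)\<^sup>2 > 0"
proof -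
  have "(- ((k1\<^sup>2 - 1)\<^sup>2)) * b\<^sup>2 + (2 * (k1 ^ 4 + 2 * k1 * k2 + 1)) * b + (- ((1 + k1\<^sup>2)\<^sup>2)) > 0"
  proof (rule quad_between[where x = "beta_crit k1 k2" and y = 1])
    show "(- ((k1\<^sup>2 - 1)\<^sup>2)) * 1\<^sup>2 + (2 * (k1 ^ 4 + 2 * k1 * k2 + 1)) * 1 + (- ((1 + k1\<^sup>2)\<^sup>2)) > 0"
    proof -
      have eq: "(- ((k1\<^sup>2 - 1)\<^sup>2)) * 1\<^sup>2 + (2 * (k1 ^ 4 + 2 * k1 * k2 + 1)) * 1 + (- ((1 + k1\<^sup>2)\<^sup>2)) = 4 * k1 * k2"
        by (simp add: power2_eq_square power4_eq_xxxx algebra_simps)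
      show ?thesis unfolding eq using k1 k2 by simp
    qed
  qed (use beta_crit_facts[OF k1 k2] b in auto)
  then show ?thesis unfolding det_formula .
qed

lemma lambdaU_pos:
  fixes k1 k2 b :: real
  assumes k1: "k1 > 0" and k2: "k2 > 0" and b: "beta_crit k1 k2 < b" "b \<le> 1"
  shows "l1 (pU k1 k2 b) (rU k1 k2 b) (qU k1 k2 b) > 0"
proof (rule l1_pos)
  have "b > 0" using beta_crit_facts(1)[OF k1 k2] b by simp
  then show "pU k1 k2 b > 0" unfolding pU_def using k1 k2 by (simp add: add_pos_pos)
qed (rule det_pos[OF assms])

lemma lX: "l1 (1 + k1\<^sup>2) k1 1 > 0" "l2 (1 + k1\<^sup>2) k1 1 \<ge> 1"
proof -
  show "l1 (1 + k1\<^sup>2) k1 1 > 0" by (rule l1_pos) (simp_all add: add_pos_nonneg)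
  show "l2 (1 + k1\<^sup>2) k1 1 \<ge> 1" using l_facts(5)[of "1 + k1\<^sup>2" k1 1] by simp
qed

definition Emap :: "real \<Rightarrow> state \<Rightarrow> state" where
  "Emap k1 v = (fst v, k1 *\<^sub>R fst v + snd v)"

lemma Emap_linear: "bounded_linear (Emap k1)"
proof -
  have "linear (Emap k1)"
    by (rule linearI) (auto simp: Emap_def algebra_simps)
  then show ?thesis by (simp add: linear_conv_bounded_linear)
qed

lemma Emap_sq: "Emap k1 v \<bullet> Emap k1 v = Qf (1 + k1\<^sup>2) k1 1 v"
  unfolding Emap_def Qf_def
  by (simp add: inner_Pair inner_add_left inner_add_right inner_commute power2_eq_square algebra_simps)

lemma closed_loop_eq: "closed_loop P \<mu> r rs \<beta> k1 k2 s v = ltv_field \<beta> k1 k2 s v"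
  unfolding closed_loop_def u_relieved_def ltv_field_def by simp

lemma idA: "2 * (Emap k1 v \<bullet> Emap k1 (ltv_field \<beta> k1 k2 s v))
    = - Qf (pU k1 k2 (\<beta> s)) (rU k1 k2 (\<beta> s)) (qU k1 k2 (\<beta> s)) v"
  unfolding Emap_def Qf_def ltv_field_def pU_def rU_def qU_def
  by (simp add: inner_Pair inner_add_left inner_add_right inner_diff_left inner_diff_right
      inner_commute power2_eq_square algebra_simps)

lemma idB: "Qf (pU k1 k2 1) (rU k1 k2 1) (qU k1 k2 1) v
    = 2 * k1 * (fst v \<bullet> fst v) + 2 * k2 * ((k1 *\<^sub>R fst v + snd v) \<bullet> (k1 *\<^sub>R fst v + snd v))"
  unfolding Qf_def pU_def rU_def qU_def
  by (simp add: inner_add_left inner_add_right inner_commute power2_eq_square algebra_simps)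

lemma idAff:
  "Qf (pU k1 k2 b) (rU k1 k2 b) (qU k1 k2 b) v = Qf (pU k1 k2 b0) (rU k1 k2 b0) (qU k1 k2 b0) v
     + (b - b0) * (2 * (k1 + k1\<^sup>2 * k2) * (fst v \<bullet> fst v) + 2 * (k1\<^sup>2 + 2 * k1 * k2 + 1) * (fst v \<bullet> snd v)
         + 2 * (k1 + k2) * (snd v \<bullet> snd v))"
  unfolding Qf_def pU_def rU_def qU_def by (simp add: algebra_simps)

lemma Qf_between:
  assumes "b0 \<le> b" "b \<le> 1"
  shows "Qf (pU k1 k2 b) (rU k1 k2 b) (qU k1 k2 b) v \<ge>
     min (Qf (pU k1 k2 b0) (rU k1 k2 b0) (qU k1 k2 b0) v) (Qf (pU k1 k2 1) (rU k1 k2 1) (qU k1 k2 1) v)"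
proof -
  define K where "K = 2 * (k1 + k1\<^sup>2 * k2) * (fst v \<bullet> fst v) + 2 * (k1\<^sup>2 + 2 * k1 * k2 + 1) * (fst v \<bullet> snd v)
         + 2 * (k1 + k2) * (snd v \<bullet> snd v)"
  have e1: "Qf (pU k1 k2 b) (rU k1 k2 b) (qU k1 k2 b) v = Qf (pU k1 k2 b0) (rU k1 k2 b0) (qU k1 k2 b0) v + (b - b0) * K"
    unfolding K_def by (rule idAff)
  have e2: "Qf (pU k1 k2 b) (rU k1 k2 b) (qU k1 k2 b) v = Qf (pU k1 k2 1) (rU k1 k2 1) (qU k1 k2 1) v + (b - 1) * K"
    unfolding K_def by (rule idAff)
  show ?thesis
  proof (cases "K \<ge> 0")
    case True
    then have "(b - b0) * K \<ge> 0" using assms by simp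
    then show ?thesis using e1 by linarith
  next
    case False
    then have "(b - 1) * K \<ge> 0" using assms by (simp add: mult_nonpos_nonpos)
    then show ?thesis using e2 by linarith
  qed
qed

lemma part1:
  fixes z :: "real \<Rightarrow> state" and \<beta> :: "real \<Rightarrow> real"
  assumes k1: "k1 > 0" and k2: "k2 > 0" and bm: "beta_crit k1 k2 < bm" "bm \<le> 1"
    and br: "\<forall>t\<ge>0. bm \<le> \<beta> t \<and> \<beta> t \<le> 1"
    and T: "T \<ge> 0"
    and dz: "\<forall>s\<in>{0..T}. (z has_vector_derivative ltv_field \<beta> k1 k2 s (z s)) (at s within {0..T})"
    and t: "t \<in> {0..T}"
  shows "norm (z t) \<le> rho_const k1 * norm (z 0) * exp (- theta_const k1 k2 bm * t)"
proof -
  define lU where "lU = l1 (pU k1 k2 bm) (rU k1 k2 bm) (qU k1 k2 bm)"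
  define lX1 where "lX1 = l1 (1 + k1\<^sup>2) k1 1"
  define lX2 where "lX2 = l2 (1 + k1\<^sup>2) k1 1"
  define c where "c = lU / lX2"
  have lU0: "lU > 0" unfolding lU_def by (rule lambdaU_pos[OF k1 k2 bm])
  have lX1p: "lX1 > 0" and lX2g: "lX2 \<ge> 1" unfolding lX1_def lX2_def using lX by auto
  have lX12: "lX1 \<le> lX2" unfolding lX1_def lX2_def by (rule l_facts(7))
  have theta: "theta_const k1 k2 bm = c / 2"
    unfolding theta_const_def c_def lU_def lX2_def Umat_eq lmin_block Xmat_def lmax_block by simp
  have rho: "rho_const k1 = sqrt (lX2 / lX1)"
    unfolding rho_const_def lX1_def lX2_def Xmat_def lmin_block lmax_block by simp
  have c0: "c \<ge> 0" unfolding c_def using lU0 lX2g by simp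
  have cle: "c \<le> lU" unfolding c_def using lU0 lX2g by (simp add: divide_le_eq)
  define e :: vec3 where "e = axis 1 1"
  have ee: "e \<bullet> e = 1" unfolding e_def by (simp add: inner_axis_axis)
  have c2k1: "c \<le> 2 * k1"
  proof -
    define v :: state where "v = (e, - k1 *\<^sub>R e)"
    have "lU * (norm v)\<^sup>2 \<le> Qf (pU k1 k2 bm) (rU k1 k2 bm) (qU k1 k2 bm) v"
      unfolding lU_def by (rule rayleigh)
    moreover have "(norm v)\<^sup>2 = 1 + k1\<^sup>2" unfolding norm_state_sq v_def using ee
      by (simp add: power2_eq_square)
    moreover have "Qf (pU k1 k2 bm) (rU k1 k2 bm) (qU k1 k2 bm) v = 2 * k1"
      unfolding Qf_def v_def pU_def rU_def qU_def using ee by (simp add: power2_eq_square algebra_simps)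
    ultimately have "lU * (1 + k1\<^sup>2) \<le> 2 * k1" by simp
    moreover have "lU \<le> lU * (1 + k1\<^sup>2)" using lU0 by simp
    ultimately show ?thesis using cle by linarith
  qed
  have c2k2: "c \<le> 2 * k2"
  proof -
    define v :: state where "v = (0, e)"
    have "lU * (norm v)\<^sup>2 \<le> Qf (pU k1 k2 bm) (rU k1 k2 bm) (qU k1 k2 bm) v"
      unfolding lU_def by (rule rayleigh)
    moreover have "(norm v)\<^sup>2 = 1" unfolding norm_state_sq v_def using ee by simp
    moreover have "Qf (pU k1 k2 bm) (rU k1 k2 bm) (qU k1 k2 bm) v = 2 * ((k1 + k2) * bm - k1)"
      unfolding Qf_def v_def qU_def using ee by simp
    ultimately have "lU \<le> 2 * ((k1 + k2) * bm - k1)" by simp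
    moreover have "(k1 + k2) * bm \<le> k1 + k2" using bm k1 k2 by simp
    ultimately show ?thesis using cle by (smt (verit))
  qed
  have key: "2 * (Emap k1 v \<bullet> Emap k1 (ltv_field \<beta> k1 k2 s v)) \<le> - c * (Emap k1 v \<bullet> Emap k1 v)"
    if s: "s \<ge> 0" for s v
  proof -
    have V: "Emap k1 v \<bullet> Emap k1 v = fst v \<bullet> fst v + (k1 *\<^sub>R fst v + snd v) \<bullet> (k1 *\<^sub>R fst v + snd v)"
      unfolding Emap_def by (simp add: inner_Pair)
    have Vle: "Emap k1 v \<bullet> Emap k1 v \<le> lX2 * (norm v)\<^sup>2"
      unfolding Emap_sq lX2_def by (rule rayleigh)
    have V0: "Emap k1 v \<bullet> Emap k1 v \<ge> 0" by simp
    have q0: "Qf (pU k1 k2 bm) (rU k1 k2 bm) (qU k1 k2 bm) v \<ge> c * (Emap k1 v \<bullet> Emap k1 v)"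
    proof -
      have "c * (Emap k1 v \<bullet> Emap k1 v) \<le> c * (lX2 * (norm v)\<^sup>2)"
        using Vle c0 by (rule mult_left_mono)
      also have "\<dots> = lU * (norm v)\<^sup>2" unfolding c_def using lX2g by simp
      also have "\<dots> \<le> Qf (pU k1 k2 bm) (rU k1 k2 bm) (qU k1 k2 bm) v" unfolding lU_def by (rule rayleigh)
      finally show ?thesis .
    qed
    have q1: "Qf (pU k1 k2 1) (rU k1 k2 1) (qU k1 k2 1) v \<ge> c * (Emap k1 v \<bullet> Emap k1 v)"
    proof -
      have a1: "c * (fst v \<bullet> fst v) \<le> 2 * k1 * (fst v \<bullet> fst v)"
        using c2k1 by (rule mult_right_mono) simp
      have a2: "c * ((k1 *\<^sub>R fst v + snd v) \<bullet> (k1 *\<^sub>R fst v + snd v))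
         \<le> 2 * k2 * ((k1 *\<^sub>R fst v + snd v) \<bullet> (k1 *\<^sub>R fst v + snd v))"
        using c2k2 by (rule mult_right_mono) simp
      show ?thesis unfolding idB V using a1 a2 by (simp add: algebra_simps)
    qed
    have "Qf (pU k1 k2 (\<beta> s)) (rU k1 k2 (\<beta> s)) (qU k1 k2 (\<beta> s)) v \<ge> c * (Emap k1 v \<bullet> Emap k1 v)"
      using Qf_between[of bm "\<beta> s" k1 k2 v] br s q0 q1 by fastforce
    then show ?thesis unfolding idA by simp
  qed
  have t0: "0 \<le> t" "t \<le> T" using t by auto
  have gd: "((\<lambda>s. Emap k1 (z s)) has_vector_derivative Emap k1 (ltv_field \<beta> k1 k2 s (z s))) (at s within {0..t})"
    if "s \<in> {0..t}" for s
  proof -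
    have "(z has_vector_derivative ltv_field \<beta> k1 k2 s (z s)) (at s within {0..T})"
      using dz that t0 by auto
    then have "(z has_vector_derivative ltv_field \<beta> k1 k2 s (z s)) (at s within {0..t})"
      by (rule has_vector_derivative_within_subset) (use t0 in auto)
    then show ?thesis by (rule bounded_linear.has_vector_derivative[OF Emap_linear])
  qed
  have dec: "Emap k1 (z t) \<bullet> Emap k1 (z t) \<le> exp (- c * (t - 0)) * (Emap k1 (z 0) \<bullet> Emap k1 (z 0))"
    by (rule sq_bounds(1)[OF t0(1) gd]) (use key in auto)
  have "lX1 * (norm (z t))\<^sup>2 \<le> Emap k1 (z t) \<bullet> Emap k1 (z t)"
    unfolding Emap_sq lX1_def by (rule rayleigh)
  also have "\<dots> \<le> exp (- c * t) * (Emap k1 (z 0) \<bullet> Emap k1 (z 0))" using dec by simp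
  also have "\<dots> \<le> exp (- c * t) * (lX2 * (norm (z 0))\<^sup>2)"
    by (rule mult_left_mono) (unfold Emap_sq lX2_def, rule rayleigh, simp)
  finally have m: "lX1 * (norm (z t))\<^sup>2 \<le> exp (- c * t) * (lX2 * (norm (z 0))\<^sup>2)" .
  have "(norm (z t))\<^sup>2 \<le> (rho_const k1 * norm (z 0) * exp (- theta_const k1 k2 bm * t))\<^sup>2"
  proof -
    have "(rho_const k1 * norm (z 0) * exp (- theta_const k1 k2 bm * t))\<^sup>2
        = (lX2 / lX1) * (norm (z 0))\<^sup>2 * exp (- c * t)"
    proof -
      have "(exp (- theta_const k1 k2 bm * t))\<^sup>2 = exp (- c * t)"
        unfolding theta by (simp add: power2_eq_square flip: exp_add)
      moreover have "(rho_const k1)\<^sup>2 = lX2 / lX1" unfolding rho using lX1p lX2g by simp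
      ultimately show ?thesis by (simp add: power_mult_distrib)
    qed
    also have "\<dots> \<ge> (norm (z t))\<^sup>2" using m lX1p by (simp add: field_simps)
    finally show ?thesis .
  qed
  moreover have "rho_const k1 * norm (z 0) * exp (- theta_const k1 k2 bm * t) \<ge> 0"
    unfolding rho using lX1p lX2g by simp
  ultimately show ?thesis by (rule power2_le_imp_le)
qed

lemma sq_to_norm:
  fixes x y :: "'a::real_inner"
  assumes "x \<bullet> x \<le> exp (2 * L * t) * (y \<bullet> y)"
  shows "norm x \<le> exp (L * t) * norm y"
proof (rule power2_le_imp_le)
  have "(exp (L * t) * norm y)\<^sup>2 = exp (2 * L * t) * (y \<bullet> y)"
    by (simp add: power_mult_distrib power2_norm_eq_inner flip: exp_add) (simp add: power2_eq_square flip: exp_add)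
  then show "(norm x)\<^sup>2 \<le> (exp (L * t) * norm y)\<^sup>2" using assms by (simp add: power2_norm_eq_inner)
qed simp

locale linode =
  fixes F :: "real \<Rightarrow> state \<Rightarrow> state" and L :: real
  assumes lin: "\<And>s u v. F s (u - v) = F s u - F s v"
    and bd: "\<And>s v. s \<ge> 0 \<Longrightarrow> norm (F s v) \<le> L * norm v"
    and L0: "L \<ge> 0"
begin

definition sol :: "(real \<Rightarrow> state) \<Rightarrow> bool" where
  "sol z \<longleftrightarrow> (\<forall>s\<ge>0. (z has_vector_derivative F s (z s)) (at s within {0..}))"

lemma inner_bd: "s \<ge> 0 \<Longrightarrow> \<bar>v \<bullet> F s v\<bar> \<le> L * (v \<bullet> v)"
proof -
  assume s: "s \<ge> 0"
  have "\<bar>v \<bullet> F s v\<bar> \<le> norm v * norm (F s v)" by (rule Cauchy_Schwarz_ineq2)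
  also have "\<dots> \<le> norm v * (L * norm v)" by (rule mult_left_mono[OF bd[OF s]]) simp
  also have "\<dots> = L * (v \<bullet> v)" by (simp add: power2_norm_eq_inner[symmetric] power2_eq_square)
  finally show ?thesis .
qed

lemma sol_sub: "sol z \<Longrightarrow> 0 \<le> t \<Longrightarrow> s \<in> {0..t} \<Longrightarrow>
   (z has_vector_derivative F s (z s)) (at s within {0..t})"
  unfolding sol_def by (auto intro: has_vector_derivative_within_subset)

lemma growth: assumes "sol z" "t \<ge> 0" shows "z t \<bullet> z t \<le> exp (2 * L * t) * (z 0 \<bullet> z 0)"
proof -
  have "z t \<bullet> z t \<le> exp (- (- 2 * L) * (t - 0)) * (z 0 \<bullet> z 0)"
  proof (rule sq_bounds(1)[OF assms(2)])
    show "(z has_vector_derivative F s (z s)) (at s within {0..t})" if "s \<in> {0..t}" for s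
      using sol_sub[OF assms that] .
    show "2 * (z s \<bullet> F s (z s)) \<le> - (- 2 * L) * (z s \<bullet> z s)" if "s \<in> {0..t}" for s
      using inner_bd[of s "z s"] that by auto
  qed
  then show ?thesis by simp
qed

lemma backb: assumes "sol z" "t \<ge> 0" shows "z 0 \<bullet> z 0 \<le> exp (2 * L * t) * (z t \<bullet> z t)"
proof -
  have "z 0 \<bullet> z 0 \<le> exp ((2 * L) * (t - 0)) * (z t \<bullet> z t)"
  proof (rule sq_bounds(2)[OF assms(2)])
    show "(z has_vector_derivative F s (z s)) (at s within {0..t})" if "s \<in> {0..t}" for s
      using sol_sub[OF assms that] .
    show "2 * (z s \<bullet> F s (z s)) \<ge> - (2 * L) * (z s \<bullet> z s)" if "s \<in> {0..t}" for s
      using inner_bd[of s "z s"] that by auto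
  qed
  then show ?thesis by simp
qed

lemma sol_diff: "sol z \<Longrightarrow> sol z' \<Longrightarrow> sol (\<lambda>s. z s - z' s)"
  unfolding sol_def by (auto simp: lin intro!: has_vector_derivative_diff)

lemma uniq: assumes "sol z" "sol z'" "t \<ge> 0" "z t = z' t" shows "z 0 = z' 0"
proof -
  have "(z 0 - z' 0) \<bullet> (z 0 - z' 0) \<le> exp (2 * L * t) * ((z t - z' t) \<bullet> (z t - z' t))"
    using backb[OF sol_diff[OF assms(1,2)] assms(3)] by simp
  then have "(z 0 - z' 0) \<bullet> (z 0 - z' 0) \<le> 0" using assms(4) by simp
  then have "(z 0 - z' 0) \<bullet> (z 0 - z' 0) = 0" by (meson inner_ge_zero order_antisym)
  then show ?thesis by simp
qed

lemma null_hit: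
  fixes w w' :: "real \<Rightarrow> vec3"
  assumes wd: "\<And>t. t \<ge> 0 \<Longrightarrow> (w has_vector_derivative w' t) (at t within {0..})"
    and wc: "continuous_on {0..} w'"
  shows "negligible {z0. \<exists>z. z 0 = z0 \<and> sol z \<and> (\<exists>t\<ge>0. fst (z t) = w t)}"
proof -
  define tp :: "state \<Rightarrow> real" where "tp p = fst p $ 1" for p
  define S where "S = {p. fst p $ 2 = 0 \<and> tp p \<ge> 0 \<and> (\<exists>z. sol z \<and> z (tp p) = (w (tp p), snd p))}"
  define zc where "zc p = (SOME z. sol z \<and> z (tp p) = (w (tp p), snd p))" for p
  define f where "f p = zc p 0" for p
  have zc: "sol (zc p) \<and> zc p (tp p) = (w (tp p), snd p)" if "p \<in> S" for p
  proof -
    have "\<exists>z. sol z \<and> z (tp p) = (w (tp p), snd p)" using that unfolding S_def by auto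
    then show ?thesis unfolding zc_def by (rule someI_ex)
  qed
  have tp_le: "\<bar>tp y - tp x\<bar> \<le> norm (y - x)" for x y
  proof -
    have "\<bar>tp y - tp x\<bar> = \<bar>fst (y - x) $ 1\<bar>" unfolding tp_def by simp
    also have "\<dots> \<le> norm (fst (y - x))" by (rule component_le_norm_cart)
    also have "\<dots> \<le> norm (y - x)" using norm_fst_le[of "fst (y - x)" "snd (y - x)"] by (metis prod.collapse)
    finally show ?thesis .
  qed
  have snd_le: "norm (snd y - snd x) \<le> norm (y - x)" for x y :: state
    using norm_snd_le[of "snd (y - x)" "fst (y - x)"] by (metis norm_commute prod.collapse snd_diff)
  have negS: "negligible S"
  proof (rule negligible_subset)
    show "negligible {v::state. (axis 2 1, 0::vec3) \<bullet> v = 0}"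
      by (rule negligible_hyperplane) (simp add: zero_prod_def axis_eq_0_iff)
    show "S \<subseteq> {v::state. (axis 2 1, 0::vec3) \<bullet> v = 0}"
    proof
      fix v assume "v \<in> S"
      then have "fst v $ 2 = 0" unfolding S_def by simp
      then show "v \<in> {v::state. (axis 2 1, 0::vec3) \<bullet> v = 0}"
        by (cases v) (simp add: inner_axis')
    qed
  qed
  have lips: "\<exists>T B. open T \<and> x \<in> T \<and> (\<forall>y \<in> S \<inter> T. norm (f y - f x) \<le> B * norm (y - x))"
    if x: "x \<in> S" for x
  proof -
    define N where "N = tp x + 1"
    have tx0: "tp x \<ge> 0" using x unfolding S_def by simp
    have N0: "N \<ge> 0" unfolding N_def using tx0 by simp
    have "bounded (w' ` {0..N})"
      by (rule compact_imp_bounded, rule compact_continuous_image)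
         (use wc in \<open>auto intro: continuous_on_subset\<close>)
    then obtain Mw where Mw: "Mw > 0" "\<And>s. s \<in> {0..N} \<Longrightarrow> norm (w' s) \<le> Mw"
      unfolding bounded_pos by auto
    have wlip: "norm (w a - w b) \<le> Mw * \<bar>a - b\<bar>" if "a \<in> {0..N}" "b \<in> {0..N}" for a b
    proof (rule vec_mvt[of "{0..N}" w w'])
      show "(w has_vector_derivative w' s) (at s within {0..N})" if "s \<in> {0..N}" for s
        using wd[of s] that by (auto intro: has_vector_derivative_within_subset)
    qed (use Mw that in auto)
    define zx where "zx = zc x"
    have zx: "sol zx" "zx (tp x) = (w (tp x), snd x)" using zc[OF x] unfolding zx_def by auto
    define Mz where "Mz = L * exp (L * N) * norm (zx 0)"
    have Mz0: "Mz \<ge> 0" unfolding Mz_def using L0 by simp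
    have Fz: "norm (F s (zx s)) \<le> Mz" if "s \<in> {0..N}" for s
    proof -
      have "norm (F s (zx s)) \<le> L * norm (zx s)" using bd that by auto
      also have "\<dots> \<le> L * (exp (L * s) * norm (zx 0))"
        by (rule mult_left_mono[OF sq_to_norm[OF growth[OF zx(1)]] L0]) (use that in auto)
      also have "\<dots> \<le> L * (exp (L * N) * norm (zx 0))"
      proof (intro mult_left_mono L0 mult_right_mono)
        show "exp (L * s) \<le> exp (L * N)" using that L0 by (simp add: mult_left_mono)
      qed simp
      finally show ?thesis unfolding Mz_def by simp
    qed
    have zlip: "norm (zx a - zx b) \<le> Mz * \<bar>a - b\<bar>" if "a \<in> {0..N}" "b \<in> {0..N}" for a b
    proof (rule vec_mvt[of "{0..N}" zx "\<lambda>s. F s (zx s)"])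
      show "(zx has_vector_derivative F s (zx s)) (at s within {0..N})" if "s \<in> {0..N}" for s
        by (rule sol_sub[OF zx(1) N0 that])
    qed (use Fz that in auto)
    define B where "B = exp (L * N) * (Mz + Mw + 1)"
    show ?thesis
    proof (intro exI conjI ballI)
      show "open (ball x 1)" by simp
      show "x \<in> ball x 1" by simp
      fix y assume y: "y \<in> S \<inter> ball x 1"
      have yS: "y \<in> S" using y by simp
      have dxy: "norm (y - x) < 1" using y by (simp add: dist_norm norm_minus_commute)
      have ty0: "tp y \<ge> 0" using yS unfolding S_def by simp
      have tyN: "tp y \<le> N" using tp_le[of y x] dxy unfolding N_def by linarith
      define zy where "zy = zc y"
      have zy: "sol zy" "zy (tp y) = (w (tp y), snd y)" using zc[OF yS] unfolding zy_def by auto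
      define d where "d s = zy s - zx s" for s
      have sd: "sol d" unfolding d_def by (rule sol_diff[OF zy(1) zx(1)])
      have "norm (f y - f x) = norm (d 0)" unfolding f_def d_def zx_def zy_def ..
      also have "\<dots> \<le> exp (L * tp y) * norm (d (tp y))"
        by (rule sq_to_norm[OF backb[OF sd ty0]])
      also have "\<dots> \<le> exp (L * N) * norm (d (tp y))"
        by (rule mult_right_mono) (use tyN L0 in \<open>auto intro: mult_left_mono\<close>)
      also have "\<dots> \<le> exp (L * N) * ((Mz + Mw + 1) * norm (y - x))"
      proof (rule mult_left_mono)
        have dty: "d (tp y) = (w (tp y) - w (tp x), snd y - snd x) + (zx (tp x) - zx (tp y))"
          unfolding d_def zy(2) zx(2) by simp
        have "norm (d (tp y)) \<le> norm (w (tp y) - w (tp x)) + norm (snd y - snd x) + norm (zx (tp x) - zx (tp y))"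
          unfolding dty by (rule order_trans[OF norm_triangle_ineq]) (simp add: norm_Pair_le)
        also have "\<dots> \<le> Mw * \<bar>tp y - tp x\<bar> + norm (y - x) + Mz * \<bar>tp x - tp y\<bar>"
          using wlip[of "tp y" "tp x"] zlip[of "tp x" "tp y"] snd_le[of y x] ty0 tyN tx0
          unfolding N_def by auto
        also have "\<dots> \<le> Mw * norm (y - x) + norm (y - x) + Mz * norm (y - x)"
          using tp_le[of y x] Mw(1) Mz0 by (intro add_mono mult_left_mono) (auto simp: abs_minus_commute)
        finally show "norm (d (tp y)) \<le> (Mz + Mw + 1) * norm (y - x)" by (simp add: algebra_simps)
      qed simp
      finally show "norm (f y - f x) \<le> B * norm (y - x)" unfolding B_def by simp
    qed
  qed
  have negf: "negligible (f ` S)"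
    by (rule negligible_locally_Lipschitz_image[OF _ negS lips]) simp_all
  show ?thesis
  proof (rule negligible_subset[OF negf], rule subsetI)
    fix z0 assume "z0 \<in> {z0. \<exists>z. z 0 = z0 \<and> sol z \<and> (\<exists>t\<ge>0. fst (z t) = w t)}"
    then obtain z t where z: "z 0 = z0" "sol z" "t \<ge> 0" "fst (z t) = w t" by auto
    define p :: state where "p = (\<chi> i. if i = 1 then t else 0, snd (z t))"
    have tpp: "tp p = t" unfolding p_def tp_def by simp
    have zt: "z t = (w t, snd (z t))" using z(4) by (metis prod.collapse)
    have pS: "p \<in> S" unfolding S_def using tpp z zt by (auto simp: p_def)
    have "zc p 0 = z 0"
      using zc[OF pS] tpp zt uniq[OF _ z(2) z(3)] unfolding p_def by (metis snd_conv)
    then show "z0 \<in> f ` S" using pS z(1) unfolding f_def by force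
  qed
qed

end

theorem proposition2:
  fixes P :: nat and \<mu> :: "nat \<Rightarrow> real" and r :: "nat \<Rightarrow> real \<Rightarrow> real^3"
    and rs :: "real \<Rightarrow> real^3" and k1 k2 \<beta>min :: real and \<beta> :: "real \<Rightarrow> real"
  assumes P: "P \<ge> 1"
    and mu_pos: "\<forall>j\<in>{1..P}. \<mu> j > 0"
    and r_C1: "\<forall>j\<in>{1..P}. C1_nonneg (r j)"
    and r1_zero: "\<forall>t\<ge>0. r 1 t = 0"
    and rs_C1: "C1_nonneg rs"
    and rs_ne: "\<forall>t\<ge>0. \<forall>j\<in>{1..P}. rs t \<noteq> r j t"
    and k1: "k1 > 0" and k2: "k2 > 0"
    and bmin: "beta_crit k1 k2 < \<beta>min" "\<beta>min \<le> 1"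
    and beta_cont: "continuous_on {0..} \<beta>"
    and beta_range: "\<forall>t\<ge>0. \<beta>min \<le> \<beta> t \<and> \<beta> t \<le> 1"
  shows "rho_const k1 > 0 \<and> theta_const k1 k2 \<beta>min > 0
    \<and> (\<forall>z0 :: (real^3) \<times> (real^3). \<forall>T\<ge>0. \<forall>z :: real \<Rightarrow> (real^3) \<times> (real^3).
          z 0 = z0
          \<and> (\<forall>s\<in>{0..T}. (z has_vector_derivative closed_loop P \<mu> r rs \<beta> k1 k2 s (z s)) (at s within {0..T}))
          \<and> (\<forall>s\<in>{0..T}. z s \<in> dom_D P r rs s)
          \<longrightarrow> (\<forall>t\<in>{0..T}. norm (z t) \<le> rho_const k1 * norm z0 * exp (- theta_const k1 k2 \<beta>min * t)))
    \<and> {z0 :: (real^3) \<times> (real^3). \<exists>z :: real \<Rightarrow> (real^3) \<times> (real^3).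
          z 0 = z0
          \<and> (\<forall>s\<ge>0. (z has_vector_derivative ltv_field \<beta> k1 k2 s (z s)) (at s within {0..}))
          \<and> (\<exists>t\<ge>0. \<exists>j\<in>{1..P}. fst (z t) = wj r rs j t)} \<in> null_sets lebesgue"
proof (intro conjI allI impI ballI)
  have lU0: "l1 (pU k1 k2 \<beta>min) (rU k1 k2 \<beta>min) (qU k1 k2 \<beta>min) > 0"
    by (rule lambdaU_pos[OF k1 k2 bmin])
  show "rho_const k1 > 0"
    unfolding rho_const_def Xmat_def lmin_block lmax_block using lX[of k1] by simp
  show "theta_const k1 k2 \<beta>min > 0"
    unfolding theta_const_def Umat_eq Xmat_def lmin_block lmax_block using lX[of k1] lU0 by simp
next
  fix z0 :: state and T :: real and z :: "real \<Rightarrow> state" and t :: real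
  assume T: "T \<ge> 0"
    and H: "z 0 = z0 \<and> (\<forall>s\<in>{0..T}. (z has_vector_derivative closed_loop P \<mu> r rs \<beta> k1 k2 s (z s)) (at s within {0..T}))
          \<and> (\<forall>s\<in>{0..T}. z s \<in> dom_D P r rs s)"
    and t: "t \<in> {0..T}"
  have dz: "\<forall>s\<in>{0..T}. (z has_vector_derivative ltv_field \<beta> k1 k2 s (z s)) (at s within {0..T})"
    using H unfolding closed_loop_eq by blast
  show "norm (z t) \<le> rho_const k1 * norm z0 * exp (- theta_const k1 k2 \<beta>min * t)"
    using part1[OF k1 k2 bmin beta_range T dz t] H by simp
next
  define L where "L = 1 + (1 + \<bar>\<beta>min\<bar>) * ((1 + k1 * k2) + (k1 + k2))"
  have L0: "L \<ge> 0" unfolding L_def using k1 k2 by (simp add: add_nonneg_nonneg)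
  interpret lo: linode "ltv_field \<beta> k1 k2" L
  proof
    show "ltv_field \<beta> k1 k2 s (u - v) = ltv_field \<beta> k1 k2 s u - ltv_field \<beta> k1 k2 s v" for s u v
      unfolding ltv_field_def by (simp add: algebra_simps)
    show "L \<ge> 0" by (rule L0)
    show "norm (ltv_field \<beta> k1 k2 s v) \<le> L * norm v" if s: "s \<ge> 0" for s v
    proof -
      have bs: "\<bar>\<beta> s\<bar> \<le> 1 + \<bar>\<beta>min\<bar>" using beta_range s by auto
      have nf: "norm (fst v) \<le> norm v" using norm_fst_le[of "fst v" "snd v"] by simp
      have ns: "norm (snd v) \<le> norm v" using norm_snd_le[of "snd v" "fst v"] by (simp add: norm_commute)
      have inner: "norm ((1 + k1 * k2) *\<^sub>R fst v + (k1 + k2) *\<^sub>R snd v) \<le> ((1 + k1 * k2) + (k1 + k2)) * norm v"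
      proof -
        have "norm ((1 + k1 * k2) *\<^sub>R fst v + (k1 + k2) *\<^sub>R snd v)
            \<le> (1 + k1 * k2) * norm (fst v) + (k1 + k2) * norm (snd v)"
          using k1 k2 by (intro order_trans[OF norm_triangle_ineq]) (simp add: add_nonneg_nonneg)
        also have "\<dots> \<le> (1 + k1 * k2) * norm v + (k1 + k2) * norm v"
          using k1 k2 nf ns by (intro add_mono mult_left_mono) auto
        finally show ?thesis by (simp add: algebra_simps)
      qed
      have "norm (ltv_field \<beta> k1 k2 s v) \<le> norm (snd v) + \<bar>\<beta> s\<bar> * norm ((1 + k1 * k2) *\<^sub>R fst v + (k1 + k2) *\<^sub>R snd v)"
        unfolding ltv_field_def by (rule order_trans[OF norm_Pair_le]) simp
      also have "\<dots> \<le> norm v + (1 + \<bar>\<beta>min\<bar>) * (((1 + k1 * k2) + (k1 + k2)) * norm v)"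
        using ns bs inner by (intro add_mono mult_mono) auto
      finally show ?thesis unfolding L_def by (simp add: algebra_simps)
    qed
  qed
  define Hs where "Hs j = {z0. \<exists>z. z 0 = z0 \<and> lo.sol z \<and> (\<exists>t\<ge>0. fst (z t) = wj r rs j t)}" for j
  have negH: "negligible (Hs j)" if j: "j \<in> {1..P}" for j
  proof -
    obtain r' where r': "\<forall>t\<ge>0. (r j has_vector_derivative r' t) (at t within {0..})" "continuous_on {0..} r'"
      using r_C1 j unfolding C1_nonneg_def by blast
    obtain rs' where rs': "\<forall>t\<ge>0. (rs has_vector_derivative rs' t) (at t within {0..})" "continuous_on {0..} rs'"
      using rs_C1 unfolding C1_nonneg_def by blast
    have "negligible {z0. \<exists>z. z 0 = z0 \<and> lo.sol z \<and> (\<exists>t\<ge>0. fst (z t) = wj r rs j t)}"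
    proof (rule lo.null_hit)
      show "(wj r rs j has_vector_derivative (r' t - rs' t)) (at t within {0..})" if "t \<ge> 0" for t
        unfolding wj_def[abs_def] using r'(1) rs'(1) that by (auto intro!: has_vector_derivative_diff)
      show "continuous_on {0..} (\<lambda>t. r' t - rs' t)" using r'(2) rs'(2) by (rule continuous_on_diff)
    qed
    then show ?thesis unfolding Hs_def .
  qed
  have "negligible (\<Union>j\<in>{1..P}. Hs j)"
    by (rule negligible_Union) (use negH in auto)
  moreover have "{z0 :: (real^3) \<times> (real^3). \<exists>z :: real \<Rightarrow> (real^3) \<times> (real^3).
          z 0 = z0
          \<and> (\<forall>s\<ge>0. (z has_vector_derivative ltv_field \<beta> k1 k2 s (z s)) (at s within {0..}))
          \<and> (\<exists>t\<ge>0. \<exists>j\<in>{1..P}. fst (z t) = wj r rs j t)} \<subseteq> (\<Union>j\<in>{1..P}. Hs j)"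
    unfolding Hs_def lo.sol_def by blast
  ultimately show "{z0 :: (real^3) \<times> (real^3). \<exists>z :: real \<Rightarrow> (real^3) \<times> (real^3).
          z 0 = z0
          \<and> (\<forall>s\<ge>0. (z has_vector_derivative ltv_field \<beta> k1 k2 s (z s)) (at s within {0..}))
          \<and> (\<exists>t\<ge>0. \<exists>j\<in>{1..P}. fst (z t) = wj r rs j t)} \<in> null_sets lebesgue"
    unfolding negligible_iff_null_sets[symmetric] by (rule negligible_subset)
qed

end
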